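(* Define $a_n\langle B_n\rangle$, $n\ge0$, by \[ \sum_{n=0}^{\infty}\frac{a_n\langle B_n\rangle}{n!}\alpha^n=\frac{1}{1-\alpha}\exp\!\Big(\frac{1}{1-\alpha}-1\Big). \] Then for every $n\ge0$, \[ a_n\langle B_n\rangle=\sum_{k=0}^{n}|s(n,k)|\,B_{k+1}, \] where $B_m$ is the $m$-th Bell number and $|s(n,k)|$ is the unsigned Stirling number of the first kind.
   Context: $B_m$ is the number of partitions of an $m$-element set ($B_0=1,B_1=1,B_2=2,B_3=5,\dots$). $|s(n,k)|$ is the number of permutations of $n$ elements with exactly $k$ disjoint cycles, with $|s(0,0)|=1$ and $|s(n,0)|=0$ for $n\ge1$. *)

theory Defs
  imports "HOL-Combinatorics.Stirling" "HOL-Library.Disjoint_Sets"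
    "HOL-Computational_Algebra.Formal_Power_Series"
begin

definition Bell :: "nat \<Rightarrow> nat" where
  "Bell m = card {P. partition_on {0..<m} P}"

definition aB_egf :: "real fps" where
  "aB_egf = inverse (1 - fps_X) * (fps_exp 1 oo (inverse (1 - fps_X) - 1))"

definition aB :: "nat \<Rightarrow> real" where
  "aB n = fact n * fps_nth aB_egf n"

end

theory Submission imports Defs begin

abbreviation parts :: "'a set \<Rightarrow> 'a set set set" where "parts A \<equiv> {P. partition_on A P}"

lemma parts_map:
  assumes f: "inj_on f A" and P: "partition_on A P"
  shows "partition_on (f ` A) ((`) f ` P)"
proof -
  have "partition_on (f ` A) ((`) f ` P - {{}})" by (rule partition_on_inj_image[OF P f])
  moreover have "{} \<notin> (`) f ` P" using partition_onD3[OF P] by auto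
  ultimately show ?thesis by simp
qed

lemma card_parts_bij:
  assumes f: "bij_betw f A B"
  shows "card (parts A) = card (parts B)"
proof -
  define g where "g = inv_into A f"
  have g: "bij_betw g B A" unfolding g_def by (rule bij_betw_inv_into[OF f])
  have gf: "g (f x) = x" if "x \<in> A" for x
    using f that unfolding g_def by (simp add: bij_betw_def)
  have fg: "f (g y) = y" if "y \<in> B" for y
    using f that unfolding g_def by (simp add: bij_betw_def f_inv_into_f)
  have fA: "f ` A = B" and gB: "g ` B = A" using f g by (auto simp: bij_betw_def)
  have injf: "inj_on f A" and injg: "inj_on g B" using f g by (auto simp: bij_betw_def)
  show ?thesis
  proof (rule bij_betw_same_card[of "(`) ((`) f)"], rule bij_betw_byWitness[where f' = "(`) ((`) g)"])
    show "\<forall>P\<in>parts A. (`) g ` ((`) f ` P) = P"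
    proof
      fix P assume "P \<in> parts A"
      then have sub: "\<And>p. p \<in> P \<Longrightarrow> p \<subseteq> A" by (auto simp: partition_on_def)
      have "(`) g ` ((`) f ` P) = (\<lambda>p. g ` f ` p) ` P" by (simp add: image_image)
      also have "\<dots> = (\<lambda>p. p) ` P"
        by (intro image_cong refl) (use sub gf in \<open>force simp: image_image\<close>)
      finally show "(`) g ` ((`) f ` P) = P" by simp
    qed
    show "\<forall>P\<in>parts B. (`) f ` ((`) g ` P) = P"
    proof
      fix P assume "P \<in> parts B"
      then have sub: "\<And>p. p \<in> P \<Longrightarrow> p \<subseteq> B" by (auto simp: partition_on_def)
      have "(`) f ` ((`) g ` P) = (\<lambda>p. f ` g ` p) ` P" by (simp add: image_image)
      also have "\<dots> = (\<lambda>p. p) ` P"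
        by (intro image_cong refl) (use sub fg in \<open>force simp: image_image\<close>)
      finally show "(`) f ` ((`) g ` P) = P" by simp
    qed
    show "(`) ((`) f) ` parts A \<subseteq> parts B" using parts_map[OF injf] fA by auto
    show "(`) ((`) g) ` parts B \<subseteq> parts A" using parts_map[OF injg] gB by auto
  qed
qed

lemma card_parts_Bell:
  assumes "finite A" shows "card (parts A) = Bell (card A)"
proof -
  obtain h where "bij_betw h A {0..<card A}" using ex_bij_betw_finite_nat[OF assms] by blast
  then show ?thesis unfolding Bell_def by (rule card_parts_bij)
qed

lemma parts_insert_decomp:
  assumes a: "a \<notin> A"
  shows "parts (insert a A) = (\<Union>S\<in>Pow A. insert (insert a S) ` parts (A - S))"
proof (intro equalityI subsetI)
  fix P assume "P \<in> parts (insert a A)"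
  then have P: "partition_on (insert a A) P" by simp
  obtain p where p: "p \<in> P" "a \<in> p" using partition_onD1[OF P] by auto
  have puniq: "q = p" if "q \<in> P" "a \<in> q" for q
    using P p that unfolding partition_on_def disjoint_def by blast
  define S where "S = p - {a}"
  have pS: "p = insert a S" using p S_def by auto
  have psub: "p \<subseteq> insert a A" using P p partition_onD1 by blast
  then have SA: "S \<in> Pow A" using S_def by auto
  have dj: "disjnt p (\<Union>(P - {p}))"
    using P p unfolding partition_on_def disjoint_def disjnt_def by blast
  have PP: "P = insert p (P - {p})" using p by auto
  have "partition_on (insert a A - p) (P - {p})"
    using P dj PP partition_on_insert by (metis)
  moreover have "insert a A - p = A - S" using pS a by auto
  ultimately have "P - {p} \<in> parts (A - S)" by simp
  then show "P \<in> (\<Union>S\<in>Pow A. insert (insert a S) ` parts (A - S))"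
    using SA PP pS by blast
next
  fix P assume "P \<in> (\<Union>S\<in>Pow A. insert (insert a S) ` parts (A - S))"
  then obtain S Q where S: "S \<subseteq> A" and Q: "partition_on (A - S) Q" and PQ: "P = insert (insert a S) Q"
    by auto
  have dj: "disjnt (insert a S) (\<Union>Q)" using partition_onD1[OF Q] a by (auto simp: disjnt_def)
  have "insert a A - insert a S = A - S" using a by auto
  then have "partition_on (insert a A) (insert (insert a S) Q)"
    using partition_on_insert[OF dj] Q S by auto
  then show "P \<in> parts (insert a A)" using PQ by simp
qed

lemma card_parts_insert:
  assumes a: "a \<notin> A" and fin: "finite A"
  shows "card (parts (insert a A)) = (\<Sum>S\<in>Pow A. card (parts (A - S)))"
proof -
  have notin: "a \<notin> \<Union>Q" if "Q \<in> parts (A - S)" for Q S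
    using that a partition_onD1 by fastforce
  have "card (parts (insert a A)) = (\<Sum>S\<in>Pow A. card (insert (insert a S) ` parts (A - S)))"
    unfolding parts_insert_decomp[OF a]
  proof (rule card_UN_disjoint)
    show "finite (Pow A)" using fin by simp
    show "\<forall>S\<in>Pow A. finite (insert (insert a S) ` parts (A - S))"
      using fin by (intro ballI finite_imageI finitely_many_partition_on) simp
    show "\<forall>S\<in>Pow A. \<forall>T\<in>Pow A. S \<noteq> T \<longrightarrow>
        insert (insert a S) ` parts (A - S) \<inter> insert (insert a T) ` parts (A - T) = {}"
    proof (intro ballI impI)
      fix S T assume S: "S \<in> Pow A" and T: "T \<in> Pow A" and ST: "S \<noteq> T"
      show "insert (insert a S) ` parts (A - S) \<inter> insert (insert a T) ` parts (A - T) = {}"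
      proof (rule ccontr)
        assume "\<not> ?thesis"
        then obtain P where P1: "P \<in> insert (insert a S) ` parts (A - S)"
          and P2: "P \<in> insert (insert a T) ` parts (A - T)" by auto
        from P1 obtain Q where Q: "Q \<in> parts (A - S)" and PQ: "P = insert (insert a S) Q" by (rule imageE)
        from P2 obtain R where R: "R \<in> parts (A - T)" and PR: "P = insert (insert a T) R" by (rule imageE)
        have "insert a T \<in> P" using PR by simp
        then have "insert a T \<in> insert (insert a S) Q" using PQ by simp
        moreover have "insert a T \<notin> Q" using notin[OF Q] by blast
        ultimately have "insert a T = insert a S" by simp
        then have "S = T" using S T a by (metis PowD insert_ident subsetD)
        then show False using ST by simp
      qed
    qed
  qed
  also have "\<dots> = (\<Sum>S\<in>Pow A. card (parts (A - S)))"
  proof (rule sum.cong[OF refl], rule card_image)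
    fix S assume "S \<in> Pow A"
    show "inj_on (insert (insert a S)) (parts (A - S))"
    proof (rule inj_onI)
      fix Q R assume Q: "Q \<in> parts (A - S)" and R: "R \<in> parts (A - S)"
        and eq: "insert (insert a S) Q = insert (insert a S) R"
      have "insert a S \<notin> Q" "insert a S \<notin> R" using notin[OF Q] notin[OF R] by auto
      then show "Q = R" using eq by (simp add: insert_ident)
    qed
  qed
  finally show ?thesis .
qed

lemma Bell_rec: "Bell (Suc n) = (\<Sum>i\<le>n. (n choose i) * Bell (n - i))"
proof -
  have "Bell (Suc n) = card (parts (insert n {0..<n}))"
    unfolding Bell_def by (simp add: atLeastLessThanSuc)
  also have "\<dots> = (\<Sum>S\<in>Pow {0..<n}. card (parts ({0..<n} - S)))"
    by (rule card_parts_insert) auto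
  also have "\<dots> = (\<Sum>S\<in>Pow {0..<n}. Bell (n - card S))"
  proof (rule sum.cong[OF refl])
    fix S assume "S \<in> Pow {0..<n}"
    then have "card ({0..<n} - S) = n - card S"
      by (simp add: card_Diff_subset finite_subset)
    then show "card (parts ({0..<n} - S)) = Bell (n - card S)"
      by (simp add: card_parts_Bell)
  qed
  also have "\<dots> = (\<Sum>i\<le>n. \<Sum>S\<in>{S\<in>Pow {0..<n}. card S = i}. Bell (n - card S))"
    by (rule sum.group[symmetric]) (auto simp: card_mono[of "{0..<n}", simplified, THEN order_trans])
  also have "\<dots> = (\<Sum>i\<le>n. (n choose i) * Bell (n - i))"
  proof (rule sum.cong[OF refl])
    fix i
    have "(\<Sum>S\<in>{S\<in>Pow {0..<n}. card S = i}. Bell (n - card S)) = card {S\<in>Pow {0..<n}. card S = i} * Bell (n - i)"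
      by simp
    also have "{S\<in>Pow {0..<n}. card S = i} = {S. S \<subseteq> {0..<n} \<and> card S = i}" by auto
    finally show "(\<Sum>S\<in>{S\<in>Pow {0..<n}. card S = i}. Bell (n - card S)) = (n choose i) * Bell (n - i)"
      by (simp add: n_subsets)
  qed
  finally show ?thesis .
qed

lemma ode_unique:
  fixes F G g :: "real fps"
  assumes dF: "fps_deriv F = g * F" and dG: "fps_deriv G = g * G" and z: "fps_nth F 0 = fps_nth G 0"
  shows "F = G"
proof -
  have "\<forall>m\<le>n. fps_nth F m = fps_nth G m" for n
  proof (induction n)
    case 0 then show ?case using z by simp
  next
    case (Suc n)
    have "of_nat (Suc n) * fps_nth F (Suc n) = fps_nth (g*F) n" using arg_cong[OF dF, of "\<lambda>x. fps_nth x n"] by (simp del: of_nat_Suc)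
    also have "\<dots> = fps_nth (g*G) n" using Suc.IH by (simp add: fps_mult_nth)
    also have "\<dots> = of_nat (Suc n) * fps_nth G (Suc n)" using arg_cong[OF dG, of "\<lambda>x. fps_nth x n"] by (simp del: of_nat_Suc)
    finally have "fps_nth F (Suc n) = fps_nth G (Suc n)" by (simp del: of_nat_Suc)
    then show ?case using Suc.IH le_Suc_eq by auto
  qed
  then show ?thesis by (intro fps_ext) blast
qed

definition L :: "real fps" where "L = Abs_fps (\<lambda>n. if n = 0 then 0 else 1 / of_nat n)"

lemma L0[simp]: "fps_nth L 0 = 0" by (simp add: L_def)

lemma dL: "fps_deriv L = inverse (1 - fps_X)"
proof -
  have "fps_deriv L = Abs_fps (\<lambda>n. 1)"
    by (simp add: fps_eq_iff L_def fps_deriv_nth del: of_nat_Suc)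
  also have "\<dots> = inverse (1 - fps_X)"
    by (metis fps_inverse_gp' fps_inverse_idempotent fps_nth_Abs_fps one_neq_zero)
  finally show ?thesis .
qed

lemma inv0: "fps_nth (inverse (1 - fps_X) :: real fps) 0 = 1" by simp

lemma eL: "fps_exp 1 oo L = inverse (1 - fps_X)"
proof (rule ode_unique[where g = "fps_deriv L"])
  show "fps_deriv (fps_exp 1 oo L) = fps_deriv L * (fps_exp 1 oo L)"
    by (simp add: fps_compose_deriv)
  have "fps_deriv (inverse (1 - fps_X) :: real fps) = inverse (1 - fps_X) ^ 2"
    by (simp add: fps_inverse_deriv)
  then show "fps_deriv (inverse (1 - fps_X) :: real fps) = fps_deriv L * inverse (1 - fps_X)"
    by (simp add: dL power2_eq_square)
  show "fps_nth (fps_exp 1 oo L) 0 = fps_nth (inverse (1 - fps_X)) 0" by simp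
qed

lemma one_minus_X_nth: "fps_nth ((1 - fps_X) * (G :: real fps)) n = fps_nth G n - (if n = 0 then 0 else fps_nth G (n - 1))"
proof -
  have "(1 - fps_X) * G = G - fps_X * G" by (simp add: algebra_simps)
  then show ?thesis by (simp only: fps_sub_nth fps_X_mult_nth)
qed

lemma L_stirling: "fps_nth (L ^ k) n * fact n = fact k * real (stirling n k)"
proof (induction k arbitrary: n)
  case 0
  then show ?case by (cases n) auto
next
  case (Suc k)
  note IHk = Suc.IH
  define c where "c j = fps_nth (L ^ Suc k) j" for j
  have key: "(1 - fps_X) * fps_deriv (L ^ Suc k) = of_nat (Suc k) * L ^ k"
  proof -
    have "fps_deriv (L ^ Suc k) = of_nat (Suc k) * L ^ k * inverse (1 - fps_X)"
      by (simp only: fps_deriv_power' dL diff_Suc_1) (simp add: ac_simps)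
    moreover have "(1 - fps_X) * inverse (1 - fps_X :: real fps) = 1"
      by (intro inverse_mult_eq_1') simp
    ultimately show ?thesis by (metis (no_types, lifting) mult.commute mult.left_commute mult_1_right)
  qed
  have rec: "of_nat (Suc n) * c (Suc n) = of_nat n * c n + of_nat (Suc k) * fps_nth (L ^ k) n" for n
  proof -
    have "fps_nth ((1 - fps_X) * fps_deriv (L ^ Suc k)) n = fps_nth (of_nat (Suc k) * L ^ k) n"
      by (simp only: key)
    moreover have "fps_nth (fps_deriv (L ^ Suc k)) j = of_nat (Suc j) * c (Suc j)" for j
      by (simp add: c_def del: of_nat_Suc power_Suc)
    ultimately show ?thesis unfolding one_minus_X_nth
      by (cases n) (simp_all add: fps_of_nat[symmetric] algebra_simps del: of_nat_Suc power_Suc)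
  qed
  have "c n * fact n = fact (Suc k) * real (stirling n (Suc k))" for n
  proof (induction n)
    case 0
    then show ?case by (simp add: c_def)
  next
    case (Suc n)
    have "c (Suc n) * fact (Suc n) = (of_nat (Suc n) * c (Suc n)) * fact n"
      by (simp add: algebra_simps)
    also have "\<dots> = of_nat n * (c n * fact n) + of_nat (Suc k) * (fps_nth (L ^ k) n * fact n)"
      by (simp only: rec) (simp add: algebra_simps)
    also have "\<dots> = fact (Suc k) * real (stirling (Suc n) (Suc k))"
      by (simp only: Suc.IH IHk) (simp add: algebra_simps)
    finally show ?case .
  qed
  then show ?case by (simp add: c_def)
qed

lemma Bell_0: "Bell 0 = 1"
proof -
  have "{P. partition_on {0..<0::nat} P} = {{}}" by (auto simp: partition_on_empty)
  then show ?thesis by (simp add: Bell_def)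
qed

definition Bf :: "real fps" where "Bf = Abs_fps (\<lambda>m. real (Bell m) / fact m)"

lemma dBf_nth: "fps_nth (fps_deriv Bf) n = real (Bell (Suc n)) / fact n"
  by (simp add: Bf_def del: of_nat_Suc)

lemma Bf_eq: "Bf = fps_exp 1 oo (fps_exp 1 - 1)"
proof (rule ode_unique[where g = "fps_exp 1"])
  show "fps_deriv Bf = fps_exp 1 * Bf"
  proof (rule fps_ext)
    fix n
    have "fps_nth (fps_deriv Bf) n = (\<Sum>i\<le>n. real (n choose i) * real (Bell (n - i))) / fact n"
      by (simp only: dBf_nth Bell_rec) simp
    also have "\<dots> = (\<Sum>i\<le>n. (1 / fact i) * (real (Bell (n - i)) / fact (n - i)))"
      by (simp add: sum_divide_distrib binomial_fact field_simps)
    also have "\<dots> = fps_nth (fps_exp 1 * Bf) n"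
      by (simp add: fps_mult_nth Bf_def atLeast0AtMost)
    finally show "fps_nth (fps_deriv Bf) n = fps_nth (fps_exp 1 * Bf) n" .
  qed
  show "fps_deriv (fps_exp 1 oo (fps_exp 1 - 1)) = fps_exp 1 * (fps_exp 1 oo (fps_exp 1 - 1 :: real fps))"
    by (simp add: fps_compose_deriv mult.commute)
  show "fps_nth Bf 0 = fps_nth (fps_exp 1 oo (fps_exp 1 - 1)) 0"
    by (simp add: Bf_def Bell_0)
qed

lemma egf_eq: "aB_egf = fps_deriv Bf oo L"
proof -
  have e0: "fps_nth (fps_exp 1 - 1 :: real fps) 0 = 0" by simp
  have "inverse (1 - fps_X) - 1 = (fps_exp 1 - 1) oo L"
    by (simp add: fps_compose_sub_distrib eL)
  then have "fps_exp 1 oo (inverse (1 - fps_X) - 1) = Bf oo L"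
    by (simp add: fps_compose_assoc[OF L0 e0] Bf_eq)
  then have "aB_egf = (fps_exp 1 oo L) * (Bf oo L)"
    by (simp add: aB_egf_def eL)
  also have "\<dots> = (fps_exp 1 * Bf) oo L"
    by (simp add: fps_compose_mult_distrib)
  also have "fps_exp 1 * Bf = fps_deriv Bf"
  proof -
    have "fps_deriv Bf = fps_deriv (fps_exp 1 oo (fps_exp 1 - 1))" by (simp only: Bf_eq[symmetric])
    also have "\<dots> = (fps_exp 1 oo (fps_exp 1 - 1)) * fps_exp 1"
      by (simp add: fps_compose_deriv)
    also have "\<dots> = fps_exp 1 * Bf"
      by (simp only: Bf_eq[symmetric] mult.commute)
    finally show ?thesis by (rule sym)
  qed
  finally show ?thesis .
qed

theorem mainTheorem20:
  fixes n :: nat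
  shows "aB n = (\<Sum>k=0..n. real (stirling n k) * real (Bell (k + 1)))"
proof -
  have "aB n = fact n * (\<Sum>i=0..n. real (Bell (Suc i)) / fact i * fps_nth (L ^ i) n)"
    by (simp only: aB_def egf_eq fps_compose_nth dBf_nth)
  also have "\<dots> = (\<Sum>i=0..n. real (Bell (Suc i)) * ((fps_nth (L ^ i) n * fact n) / fact i))"
    by (simp add: sum_distrib_left field_simps)
  also have "\<dots> = (\<Sum>k=0..n. real (stirling n k) * real (Bell (k + 1)))"
    by (rule sum.cong[OF refl]) (simp add: L_stirling)
  finally show ?thesis .
qed

end
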